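(* Let $m\ge 2$, and let $\omega=\sum_i\omega_i|e_i\rangle\langle e_i|$ and $\omega'=\sum_i\omega'_i|f_i\rangle\langle f_i|$ be $n$-dimensional density matrices, diagonal in (possibly different) orthonormal bases $\{|e_i\rangle\}$ and $\{|f_i\rangle\}$. Suppose $\omega\otimes\frac{1}{m}\mathbb{I}_m\succ\omega'\otimes|0\rangle\langle 0|$. Then there exists a density matrix $\tilde\omega=\sum_i\tilde\omega_i|e_i\rangle\langle e_i|$, diagonal in the basis $\{|e_i\rangle\}$, such that $d(\omega,\omega')\ge d(\omega,\tilde\omega)$ and $\omega\otimes\frac{1}{m}\mathbb{I}_m\succ\tilde\omega\otimes|0\rangle\langle 0|$.
   Context: For density matrices $\rho,\sigma$, $\rho\succ\sigma$ means that the vector of eigenvalues of $\rho$ majorizes that of $\sigma$ (vectors padded with zeros to equal length): the sum of the $k$ largest eigenvalues of $\rho$ is at least that of $\sigma$ for every $k$. $|0\rangle$ is a unit vector in $\mathbb{C}^m$. The trace distance is $d(\omega,\omega')=\frac12\|\omega-\omega'\|_1$. *)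

theory Defs
  imports "Jordan_Normal_Form.Schur_Decomposition" "Jordan_Normal_Form.Char_Poly"
    "HOL-Library.Multiset"
begin

definition ket_bra :: "complex vec \<Rightarrow> complex vec \<Rightarrow> complex mat" where
  "ket_bra v w = mat (dim_vec v) (dim_vec w) (\<lambda>(i,j). v $ i * cnj (w $ j))"

definition hermitian_mat :: "complex mat \<Rightarrow> bool" where
  "hermitian_mat A \<longleftrightarrow> square_mat A \<and> mat_adjoint A = A"

definition psd_mat :: "complex mat \<Rightarrow> bool" where
  "psd_mat A \<longleftrightarrow> hermitian_mat A \<and>
     (\<forall>v \<in> carrier_vec (dim_row A). 0 \<le> Re ((A *\<^sub>v v) \<bullet>c v))"

definition mtrace :: "complex mat \<Rightarrow> complex" where
  "mtrace A = (\<Sum>i<dim_row A. A $$ (i,i))"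

definition density_mat :: "nat \<Rightarrow> complex mat \<Rightarrow> bool" where
  "density_mat n A \<longleftrightarrow> A \<in> carrier_mat n n \<and> psd_mat A \<and> mtrace A = 1"

definition orthonormal_basis :: "nat \<Rightarrow> (nat \<Rightarrow> complex vec) \<Rightarrow> bool" where
  "orthonormal_basis n e \<longleftrightarrow> (\<forall>i<n. e i \<in> carrier_vec n) \<and>
     (\<forall>i<n. \<forall>j<n. e i \<bullet>c e j = (if i = j then 1 else 0))"

definition diag_in :: "nat \<Rightarrow> (nat \<Rightarrow> complex vec) \<Rightarrow> (nat \<Rightarrow> real) \<Rightarrow> complex mat" where
  "diag_in n e w = mat n n (\<lambda>(i,j). \<Sum>k<n. complex_of_real (w k) * (e k $ i) * cnj (e k $ j))"

definition kron :: "complex mat \<Rightarrow> complex mat \<Rightarrow> complex mat" where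
  "kron A B = mat (dim_row A * dim_row B) (dim_col A * dim_col B)
     (\<lambda>(i,j). A $$ (i div dim_row B, j div dim_col B) * B $$ (i mod dim_row B, j mod dim_col B))"

definition eigvals :: "complex mat \<Rightarrow> complex multiset" where
  "eigvals A = (THE M. char_poly A = prod_mset (image_mset (\<lambda>a. [:- a, 1:]) M))"

definition sort_desc :: "real list \<Rightarrow> real list" where
  "sort_desc xs = rev (sort xs)"

definition majorizes :: "real list \<Rightarrow> real list \<Rightarrow> bool" where
  "majorizes xs ys \<longleftrightarrow>
    (let N = max (length xs) (length ys);
         xs' = sort_desc (xs @ replicate (N - length xs) 0);
         ys' = sort_desc (ys @ replicate (N - length ys) 0)
     in \<forall>k\<le>N. sum_list (take k ys') \<le> sum_list (take k xs'))"

definition eig_list :: "complex mat \<Rightarrow> real list" where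
  "eig_list A = sorted_list_of_multiset (image_mset Re (eigvals A))"

definition mat_succ :: "complex mat \<Rightarrow> complex mat \<Rightarrow> bool" where
  "mat_succ A B \<longleftrightarrow> majorizes (eig_list A) (eig_list B)"

definition trace_norm :: "complex mat \<Rightarrow> real" where
  "trace_norm X = sum_mset (image_mset (\<lambda>a. sqrt (Re a)) (eigvals (mat_adjoint X * X)))"

definition trace_dist :: "complex mat \<Rightarrow> complex mat \<Rightarrow> real" where
  "trace_dist A B = trace_norm (A - B) / 2"

end

theory Submission
  imports Defs
begin


lemma proots_lin: "proots (\<Prod>a\<in>#M. [:-a,1:]) = (M :: complex multiset)"
proof (induction M)
  case empty then show ?case by simp
next
  case (add x M)
  have nz: "(\<Prod>a\<in>#M. [:-a,1:]) \<noteq> (0::complex poly)"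
    by (auto simp: prod_mset_zero_iff)
  have "proots (\<Prod>a\<in>#add_mset x M. [:-a,1:]) = proots ([:-x,1:] * (\<Prod>a\<in>#M. [:-a,1:]))"
    by simp
  also have "\<dots> = proots [:-x,1:] + proots (\<Prod>a\<in>#M. [:-a,1:])"
    by (rule proots_mult) (use nz in auto)
  also have "\<dots> = add_mset x M" using add by simp
  finally show ?case .
qed

lemma eigvals_eq: "char_poly A = (\<Prod>a\<in>#M. [:-a,1:]) \<Longrightarrow> eigvals A = M"
  unfolding eigvals_def
  by (rule the_equality) (auto dest: arg_cong[where f = proots] simp: proots_lin)

lemma sum_split_mult: "(\<Sum>a<n*m. f a) = (\<Sum>i<n. \<Sum>j<m. f (i*m+j::nat)) "
proof (induction n)
  case 0 then show ?case by simp
next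
  case (Suc n)
  have "{..<Suc n * m} = {..<n*m} \<union> {n*m..<n*m+m}" by auto
  then have "(\<Sum>a<Suc n*m. f a) = (\<Sum>a<n*m. f a) + (\<Sum>a\<in>{n*m..<n*m+m}. f a)"
    by (metis (no_types, lifting) atLeastLessThan_iff disjoint_iff finite_atLeastLessThan finite_lessThan lessThan_iff not_less sum.union_disjoint)
  also have "(\<Sum>a\<in>{n*m..<n*m+m}. f a) = (\<Sum>j<m. f (n*m+j))"
    using sum.shift_bounds_nat_ivl[of f 0 "n*m" m]
    by (simp add: atLeast0LessThan add.commute)
  finally show ?case using Suc by simp
qed



lemma sum_delta_mult: assumes "finite A"
  shows "(\<Sum>x\<in>A. f x * (if x = a then g x else 0)) = (if a \<in> A then f a * g a else (0::'b::comm_semiring_1))"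
proof -
  have "(\<Sum>x\<in>A. f x * (if x = a then g x else 0)) = (\<Sum>x\<in>A. if x = a then f a * g a else 0)"
    by (rule sum.cong) auto
  then show ?thesis using assms by (simp add: sum.delta)
qed

lemma sum_delta_mult1[simp]:
  "(\<Sum>x<(k::nat). f x * (if x = a then g x else 0)) = (if a < k then f a * g a else (0::'b::comm_semiring_1))"
  by (subst sum_delta_mult) simp_all

lemma sum_delta_mult2[simp]:
  "(\<Sum>x\<in>{0..<(k::nat)}. f x * (if x = a then g x else 0)) = (if a < k then f a * g a else (0::'b::comm_semiring_1))"
  by (subst sum_delta_mult) simp_all

definition dmat :: "nat \<Rightarrow> (nat \<Rightarrow> complex) \<Rightarrow> complex mat" where
  "dmat n d = mat n n (\<lambda>(i,j). if i = j then d i else 0)"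

abbreviation adj :: "complex mat \<Rightarrow> complex mat" where "adj \<equiv> mat_adjoint"

lemma adj_dims[simp]: "dim_row (adj A) = dim_col A" "dim_col (adj A) = dim_row A"
  by (auto simp: mat_adjoint_def mat_of_rows_def)

lemma adj_carrier[simp]: assumes "A \<in> carrier_mat r c" shows "adj A \<in> carrier_mat c r"
  using carrier_matD[OF assms] by (intro carrier_matI) simp_all

lemma adj_index[simp]: "i < dim_col A \<Longrightarrow> j < dim_row A \<Longrightarrow> adj A $$ (i,j) = cnj (A $$ (j,i))"
  by (auto simp: mat_adjoint_def mat_of_rows_def)

lemma adj_adj[simp]: "adj (adj A) = A"
  by (rule eq_matI) auto

lemma adj_mult: assumes "A \<in> carrier_mat a b" "B \<in> carrier_mat b c"
  shows "adj (A * B) = adj B * adj A"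
proof (rule eq_matI)
  fix i j assume ij: "i < dim_row (adj B * adj A)" "j < dim_col (adj B * adj A)"
  then show "adj (A * B) $$ (i, j) = (adj B * adj A) $$ (i, j)"
    using assms by (auto simp: scalar_prod_def cnj_sum mult.commute intro!: sum.cong)
qed (use assms in auto)

lemma dmat_carrier[simp]: "dmat n d \<in> carrier_mat n n"
  and dmat_dims[simp]: "dim_row (dmat n d) = n" "dim_col (dmat n d) = n"
  by (auto simp: dmat_def)

lemma dmat_index[simp]: "i < n \<Longrightarrow> j < n \<Longrightarrow> dmat n d $$ (i,j) = (if i = j then d i else 0)"
  by (auto simp: dmat_def)

lemma adj_dmat: "adj (dmat n d) = dmat n (\<lambda>i. cnj (d i))"
  by (rule eq_matI) auto

lemma dmat_ut: "upper_triangular (dmat n d)"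
  by (auto simp: upper_triangular_def)

lemma diag_dmat: "diag_mat (dmat n d) = map d [0..<n]"
  by (auto simp: diag_mat_def intro!: nth_equalityI)

lemma dmat_mult: "dmat n c * dmat n d = dmat n (\<lambda>i. c i * d i)"
  by (rule eq_matI) (auto simp: scalar_prod_def)

lemma conj_dmat_index: assumes "U \<in> carrier_mat n k"
  and "i < n" "j < n"
shows "(U * dmat k d * adj U) $$ (i,j) = (\<Sum>l<k. U $$ (i,l) * d l * cnj (U $$ (j,l)))"
proof -
  show ?thesis using assms
    by (simp add: scalar_prod_def atLeast0LessThan)
qed

definition unitary :: "nat \<Rightarrow> complex mat \<Rightarrow> bool" where
  "unitary n U \<longleftrightarrow> U \<in> carrier_mat n n \<and> adj U * U = 1\<^sub>m n"

lemma unitaryD: assumes "unitary n U"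
  shows "U \<in> carrier_mat n n" "adj U \<in> carrier_mat n n" "adj U * U = 1\<^sub>m n" "U * adj U = 1\<^sub>m n"
  using assms mat_mult_left_right_inverse[of "adj U" n U] by (auto simp: unitary_def)

lemma unitary_adj: assumes "unitary n U" shows "unitary n (adj U)"
  unfolding unitary_def using unitaryD[OF assms] by simp

lemma unitary_cancel: assumes "unitary n U" "X \<in> carrier_mat n k"
  shows "adj U * (U * X) = X" "U * (adj U * X) = X"
proof -
  note u = unitaryD[OF assms(1)]
  have "adj U * (U * X) = (adj U * U) * X"
    using u assms(2) by (metis assoc_mult_mat)
  then show "adj U * (U * X) = X" using u assms(2) by simp
  have "U * (adj U * X) = (U * adj U) * X"
    using u assms(2) by (metis assoc_mult_mat)
  then show "U * (adj U * X) = X" using u assms(2) by simp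
qed

lemma unitary_mult: assumes "unitary n U" "unitary n V" shows "unitary n (U * V)"
proof -
  note u = unitaryD[OF assms(1)] and v = unitaryD[OF assms(2)]
  have a: "adj (U * V) = adj V * adj U" by (rule adj_mult) (use u v in auto)
  have "adj V * adj U * (U * V) = adj V * (adj U * (U * V))"
    using u v by (metis assoc_mult_mat mult_carrier_mat)
  also have "\<dots> = adj V * V" using unitary_cancel(1)[OF assms(1) v(1)] by simp
  finally show ?thesis using u v a unfolding unitary_def by auto
qed




lemma kron_dims[simp]: "dim_row (kron A B) = dim_row A * dim_row B" "dim_col (kron A B) = dim_col A * dim_col B"
  by (auto simp: kron_def)

lemma kron_carrier[simp]: assumes "A \<in> carrier_mat a b" "B \<in> carrier_mat c d"
  shows "kron A B \<in> carrier_mat (a*c) (b*d)"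
  using carrier_matD[OF assms(1)] carrier_matD[OF assms(2)] by (intro carrier_matI) simp_all

lemma kron_index[simp]: "i < dim_row A * dim_row B \<Longrightarrow> j < dim_col A * dim_col B \<Longrightarrow>
   kron A B $$ (i,j) = A $$ (i div dim_row B, j div dim_col B) * B $$ (i mod dim_row B, j mod dim_col B)"
  by (auto simp: kron_def)

lemma div_mod_bounds: fixes i a c :: nat assumes "i < a * c" shows "i div c < a" "i mod c < c"
  using assms by (cases "c = 0"; auto simp: less_mult_imp_div_less)+

lemma divmod_pair: fixes p q d :: nat assumes "q < d" shows "(p*d+q) div d = p" "(p*d+q) mod d = q"
  using assms by auto

lemma kron_mult: assumes A: "A \<in> carrier_mat a b" and B: "B \<in> carrier_mat c d"
  and C: "C \<in> carrier_mat b e" and D: "D \<in> carrier_mat d g"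
  shows "kron A B * kron C D = kron (A * C) (B * D)"
proof (rule eq_matI)
  fix i j assume i: "i < dim_row (kron (A * C) (B * D))" and j: "j < dim_col (kron (A * C) (B * D))"
  then have i': "i < a * c" and j': "j < e * g" using assms by auto
  note ic = div_mod_bounds[OF i'] and jg = div_mod_bounds[OF j']
  have "(kron A B * kron C D) $$ (i,j) = (\<Sum>t<b*d. A $$ (i div c, t div d) * B $$ (i mod c, t mod d) *
          (C $$ (t div d, j div g) * D $$ (t mod d, j mod g)))"
    using assms i' j' by (auto simp: scalar_prod_def atLeast0LessThan intro!: sum.cong)
  also have "\<dots> = (\<Sum>p<b. \<Sum>q<d. A $$ (i div c, p) * B $$ (i mod c, q) *
          (C $$ (p, j div g) * D $$ (q, j mod g)))"
    by (simp add: sum_split_mult divmod_pair)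
  also have "\<dots> = (\<Sum>p<b. A $$ (i div c, p) * C $$ (p, j div g)) * (\<Sum>q<d. B $$ (i mod c, q) * D $$ (q, j mod g))"
    by (simp add: sum_product algebra_simps)
  also have "\<dots> = kron (A * C) (B * D) $$ (i,j)"
    using assms i' j' ic jg by (simp add: scalar_prod_def atLeast0LessThan)
  finally show "(kron A B * kron C D) $$ (i,j) = kron (A * C) (B * D) $$ (i,j)" .
qed (use assms in auto)

lemma divmod_eq_iff: fixes i j c :: nat shows "i = j \<longleftrightarrow> i div c = j div c \<and> i mod c = j mod c"
  by (metis div_mult_mod_eq)

lemma kron_one: "kron (1\<^sub>m a) (1\<^sub>m c) = 1\<^sub>m (a * c)"
proof (rule eq_matI)
  fix i j assume "i < dim_row (1\<^sub>m (a * c))" "j < dim_col (1\<^sub>m (a * c))"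
  then have i': "i < a * c" and j': "j < a * c" by auto
  note ic = div_mod_bounds[OF i'] and jc = div_mod_bounds[OF j']
  show "kron (1\<^sub>m a) (1\<^sub>m c) $$ (i, j) = 1\<^sub>m (a * c) $$ (i, j)"
    using i' j' ic jc divmod_eq_iff[of i j c] by auto
qed auto

lemma kron_dmat_ut: assumes T: "T \<in> carrier_mat m m" "upper_triangular T"
  shows "upper_triangular (kron (dmat n d) T)"
  unfolding upper_triangular_def
proof (intro allI impI)
  fix i j assume i: "i < dim_row (kron (dmat n d) T)" and ji: "j < i"
  then have i': "i < n * m" using T by auto
  then have j': "j < n * m" using ji by auto
  note ic = div_mod_bounds[OF i'] and jc = div_mod_bounds[OF j']
  show "kron (dmat n d) T $$ (i, j) = 0"
  proof (cases "i div m = j div m")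
    case True
    have "i = i div m * m + i mod m" "j = j div m * m + j mod m" by simp_all
    moreover have "i div m * m = j div m * m" using True by simp
    ultimately have "j mod m < i mod m" using ji by linarith
    then show ?thesis using T i' j' ic jc by (auto simp: upper_triangular_def)
  next
    case False
    then show ?thesis using T i' j' ic jc by auto
  qed
qed

lemma kron_dmat_diag: assumes T: "T \<in> carrier_mat m m"
  shows "diag_mat (kron (dmat n d) T) = map (\<lambda>a. d (a div m) * T $$ (a mod m, a mod m)) [0..<n*m]"
  using T by (auto simp: diag_mat_def less_mult_imp_div_less intro!: nth_equalityI)

lemma eigvals_sim_ut: assumes "similar_mat A B" "B \<in> carrier_mat N N" "upper_triangular B"
  shows "eigvals A = mset (diag_mat B)"
proof (rule eigvals_eq)
  have "char_poly A = char_poly B" by (rule char_poly_similar[OF assms(1)])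
  also have "\<dots> = (\<Prod>a\<leftarrow>diag_mat B. [:-a,1:])" by (rule char_poly_upper_triangular[OF assms(2,3)])
  also have "\<dots> = (\<Prod>a\<in>#mset (diag_mat B). [:-a,1:])"
    by (simp add: prod_mset_prod_list[symmetric])
  finally show "char_poly A = (\<Prod>a\<in>#mset (diag_mat B). [:-a,1:])" .
qed

lemma eig_conj: assumes "unitary n U" shows "eigvals (U * dmat n d * adj U) = mset (map d [0..<n])"
proof -
  note u = unitaryD[OF assms]
  have "similar_mat (U * dmat n d * adj U) (dmat n d)"
    by (rule similar_matI[where n=n]) (use u in auto)
  from eigvals_sim_ut[OF this dmat_carrier dmat_ut] show ?thesis by (simp add: diag_dmat)
qed

lemma kron_similar: assumes u: "unitary n U" and D: "D \<in> carrier_mat n n"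
  and M: "M \<in> carrier_mat m m" and sw: "similar_mat_wit M T P Q"
  shows "similar_mat (kron (U * D * adj U) M) (kron D T)"
proof -
  note uu = unitaryD[OF u]
  note s = similar_mat_witD2[OF M sw]
  have 1: "kron U P * kron (adj U) Q = 1\<^sub>m (n*m)"
    using uu s by (simp add: kron_mult[of _ n n _ m m _ n _ m] kron_one)
  have 2: "kron (adj U) Q * kron U P = 1\<^sub>m (n*m)"
    using uu s by (simp add: kron_mult[of _ n n _ m m _ n _ m] kron_one)
  have "kron U P * kron D T * kron (adj U) Q = kron (U * D) (P * T) * kron (adj U) Q"
    using uu s D by (simp add: kron_mult[of _ n n _ m m _ n _ m])
  also have "\<dots> = kron (U * D * adj U) (P * T * Q)"
    using uu s D by (simp add: kron_mult[of _ n n _ m m _ n _ m])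
  also have "\<dots> = kron (U * D * adj U) M" using s by simp
  finally have 3: "kron (U * D * adj U) M = kron U P * kron D T * kron (adj U) Q" by simp
  show ?thesis
    by (rule similar_matI[where n="n*m" and P="kron U P" and Q="kron (adj U) Q"]) (use uu s D 1 2 3 M in auto)
qed

lemma kron_eig: assumes M: "M \<in> carrier_mat m m"
  shows "\<exists>\<mu>. \<forall>n U d. unitary n U \<longrightarrow>
     eigvals (kron (U * dmat n d * adj U) M) = mset (map (\<lambda>a. d (a div m) * \<mu> (a mod m)) [0..<n*m])"
proof -
  obtain es where es: "char_poly M = (\<Prod>a\<leftarrow>es. [:- a, 1:])" using char_poly_factorized[OF M] by blast
  obtain T P Q where sd: "schur_decomposition M es = (T,P,Q)" by (cases "schur_decomposition M es") auto
  from schur_decomposition[OF M es sd] have sw: "similar_mat_wit M T P Q" and ut: "upper_triangular T" by auto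
  have T: "T \<in> carrier_mat m m" using similar_mat_witD2[OF M sw] by auto
  show ?thesis
  proof (intro exI allI impI)
    fix n U d assume u: "unitary n U"
    have "eigvals (kron (U * dmat n d * adj U) M) = mset (diag_mat (kron (dmat n d) T))"
      by (rule eigvals_sim_ut[OF kron_similar[OF u dmat_carrier M sw], where N="n*m"])
         (use T kron_dmat_ut[OF T ut] in auto)
    then show "eigvals (kron (U * dmat n d * adj U) M) = mset (map (\<lambda>a. d (a div m) * T $$ (a mod m, a mod m)) [0..<n*m])"
      by (simp add: kron_dmat_diag[OF T])
  qed
qed




lemma mult_carrier_sq[simp]: "A \<in> carrier_mat n n \<Longrightarrow> B \<in> carrier_mat n n \<Longrightarrow> A * B \<in> carrier_mat n n"
  by (rule mult_carrier_mat)

lemma cnorm_pos: fixes w :: "complex vec" assumes "w \<bullet>c w \<noteq> 0"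
  shows "Re (w \<bullet>c w) > 0" "w \<bullet>c w = complex_of_real (Re (w \<bullet>c w))"
proof -
  have ge: "w \<bullet>c w \<ge> 0" by (rule conjugate_square_ge_0_vec)
  then have "Im (w \<bullet>c w) = 0" "Re (w \<bullet>c w) \<ge> 0" by (auto simp: less_eq_complex_def)
  then show "w \<bullet>c w = complex_of_real (Re (w \<bullet>c w))" by (simp add: complex_eq_iff)
  with assms \<open>Re (w \<bullet>c w) \<ge> 0\<close> show "Re (w \<bullet>c w) > 0"
    by (metis less_eq_real_def of_real_0)
qed

lemma onb_completion: assumes v: "v \<in> carrier_vec k" and v0: "v \<noteq> 0\<^sub>v k"
  shows "\<exists>W c. unitary k W \<and> (\<forall>a<k. W $$ (a,0) = c * v $ a)"
proof -
  interpret cof_vec_space k "TYPE(complex)" .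
  define b where "b = basis_completion v"
  note bc = basis_completion[OF v v0, folded b_def]
  have k0: "k \<noteq> 0" using v v0 by auto
  then obtain vs where bv: "b = v # vs" using bc(6,7) by (cases b) auto
  define ws where "ws = gram_schmidt k b"
  note gs = gram_schmidt_result[OF bc(2) bc(4) bc(5) ws_def]
  have hd: "hd ws = v" unfolding ws_def bv by (rule gram_schmidt_hd[OF v])
  have lws: "length ws = k" using gs(4) bc(6) by simp
  have ws0: "ws ! 0 = v" using hd lws k0 by (cases ws) auto
  have wsc: "ws ! i \<in> carrier_vec k" if "i < k" for i using gs(3) lws that by auto
  have nz: "ws ! i \<bullet>c ws ! i \<noteq> 0" if "i < k" for i using gs(2) lws that by (auto simp: corthogonal_def)
  have orth: "ws ! i \<bullet>c ws ! j = 0" if "i < k" "j < k" "i \<noteq> j" for i j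
    using gs(2) lws that by (auto simp: corthogonal_def)
  define nr where "nr i = sqrt (Re (ws ! i \<bullet>c ws ! i))" for i
  have nrpos: "nr i > 0" if "i < k" for i using cnorm_pos(1)[OF nz[OF that]] by (simp add: nr_def)
  have nrsq: "complex_of_real (nr i) * complex_of_real (nr i) = ws ! i \<bullet>c ws ! i" if "i < k" for i
  proof -
    have "complex_of_real (nr i) * complex_of_real (nr i) = complex_of_real (Re (ws ! i \<bullet>c ws ! i))"
      using cnorm_pos(1)[OF nz[OF that]] by (simp add: nr_def flip: of_real_mult)
    then show ?thesis using cnorm_pos(2)[OF nz[OF that]] by simp
  qed
  define W where "W = mat k k (\<lambda>(a,i). ws ! i $ a / complex_of_real (nr i))"
  have Wc: "W \<in> carrier_mat k k" by (simp add: W_def)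
  have WW: "adj W * W = 1\<^sub>m k"
  proof (rule eq_matI)
    fix i j assume ij: "i < dim_row (1\<^sub>m k)" "j < dim_col (1\<^sub>m k)"
    then have i: "i < k" and j: "j < k" by auto
    have "(adj W * W) $$ (i,j) = (\<Sum>a<k. cnj (ws ! i $ a) * ws ! j $ a) / (complex_of_real (nr i) * complex_of_real (nr j))"
      using i j by (simp add: W_def scalar_prod_def atLeast0LessThan sum_divide_distrib)
    also have "(\<Sum>a<k. cnj (ws ! i $ a) * ws ! j $ a) = ws ! j \<bullet>c ws ! i"
      using wsc[OF i] wsc[OF j] by (simp add: scalar_prod_def atLeast0LessThan mult.commute)
    finally have e: "(adj W * W) $$ (i,j) = ws ! j \<bullet>c ws ! i / (complex_of_real (nr i) * complex_of_real (nr j))" .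
    show "(adj W * W) $$ (i,j) = 1\<^sub>m k $$ (i,j)"
    proof (cases "i = j")
      case True
      then show ?thesis using e nrsq[OF i] nz[OF i] i by simp
    next
      case False
      then show ?thesis using e orth[OF j i] i j by simp
    qed
  qed (use Wc in auto)
  show ?thesis
  proof (intro exI conjI allI impI)
    show "unitary k W" using Wc WW by (simp add: unitary_def)
    fix a assume "a < k"
    then show "W $$ (a,0) = 1 / complex_of_real (nr 0) * v $ a" using k0 ws0 by (simp add: W_def)
  qed
qed


lemma mult_assoc3: assumes "A \<in> carrier_mat n n" "B \<in> carrier_mat n n" "C \<in> carrier_mat n n"
  shows "A * B * C = A * (B * C)"
  using assms by (rule assoc_mult_mat)

lemma herm_index: assumes "adj A = A" "A \<in> carrier_mat n n" "i < n" "j < n"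
  shows "A $$ (j,i) = cnj (A $$ (i,j))"
proof -
  have "adj A $$ (j,i) = cnj (A $$ (i,j))" using assms(2-4) by simp
  then show ?thesis using assms(1) by simp
qed

lemma spectral: "A \<in> carrier_mat n n \<Longrightarrow> adj A = A \<Longrightarrow>
  \<exists>U d. unitary n U \<and> A = U * dmat n (\<lambda>i. complex_of_real (d i)) * adj U"
proof (induction n arbitrary: A)
  case 0
  show ?case
    by (rule exI[of _ "1\<^sub>m 0"], rule exI[of _ "\<lambda>_. 0"])
       (use 0 in \<open>auto simp: unitary_def intro!: eq_matI\<close>)
next
  case (Suc n)
  note A = Suc.prems(1) and herm = Suc.prems(2)
  obtain as where cp: "char_poly A = (\<Prod>a\<leftarrow>as. [:- a, 1:])" and len: "length as = Suc n"
    using char_poly_factorized[OF A] by blast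
  then obtain e rest where as: "as = e # rest" by (cases as) auto
  have "poly (char_poly A) e = 0" by (simp add: cp as)
  then have "eigenvalue A e" using eigenvalue_root_char_poly[OF A] by simp
  from find_eigenvector[OF A this] obtain v where ev: "eigenvector A v e" by blast
  then have v: "v \<in> carrier_vec (Suc n)" and v0: "v \<noteq> 0\<^sub>v (Suc n)" and Av: "A *\<^sub>v v = e \<cdot>\<^sub>v v"
    using A by (auto simp: eigenvector_def)
  obtain W c where uW: "unitary (Suc n) W" and W0: "\<And>a. a < Suc n \<Longrightarrow> W $$ (a,0) = c * v $ a"
    using onb_completion[OF v v0] by blast
  note w = unitaryD[OF uW]
  have AW0: "(A * W) $$ (a,0) = e * W $$ (a,0)" if a: "a < Suc n" for a
  proof -
    have "(A * W) $$ (a,0) = (\<Sum>l<Suc n. A $$ (a,l) * (c * v $ l))"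
      using A w a W0 by (simp add: scalar_prod_def atLeast0LessThan)
    also have "\<dots> = c * (A *\<^sub>v v) $ a"
      using A v a by (simp add: scalar_prod_def atLeast0LessThan sum_distrib_left algebra_simps)
    also have "\<dots> = e * W $$ (a,0)" using Av v a W0 by simp
    finally show ?thesis .
  qed
  define A' where "A' = adj W * A * W"
  have A'c: "A' \<in> carrier_mat (Suc n) (Suc n)" using A w by (simp add: A'_def)
  have A'eq: "A' = adj W * (A * W)" unfolding A'_def by (rule mult_assoc3) (use A w in auto)
  have herm': "adj A' = A'"
  proof -
    have "adj A' = adj W * adj (adj W * A)"
      unfolding A'_def by (rule adj_mult) (use A w in auto)
    also have "adj (adj W * A) = adj A * W" by (subst adj_mult) (use A w in auto)
    also have "adj W * (adj A * W) = A'" using A'eq herm by simp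
    finally show ?thesis .
  qed
  have col0: "A' $$ (i,0) = (if i = 0 then e else 0)" if i: "i < Suc n" for i
  proof -
    have "A' $$ (i,0) = (\<Sum>k<Suc n. adj W $$ (i,k) * (e * W $$ (k,0)))"
      unfolding A'eq using A w i AW0 by (simp add: scalar_prod_def atLeast0LessThan)
    also have "\<dots> = e * (\<Sum>k<Suc n. adj W $$ (i,k) * W $$ (k,0))"
      by (simp add: sum_distrib_left algebra_simps)
    also have "(\<Sum>k<Suc n. adj W $$ (i,k) * W $$ (k,0)) = (adj W * W) $$ (i,0)"
      using w(1) i by (simp add: scalar_prod_def atLeast0LessThan)
    finally show ?thesis using w i by simp
  qed
  have row0: "A' $$ (0,j) = (if j = 0 then e else 0)" if j: "j < Suc n" for j
  proof -
    have "A' $$ (0,j) = cnj (A' $$ (j,0))" using herm_index[OF herm' A'c, of j 0] j by simp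
    moreover have "cnj e = e" using herm_index[OF herm' A'c, of 0 0] col0[of 0] by simp
    ultimately show ?thesis using col0[OF j] by auto
  qed
  have ereal: "e = complex_of_real (Re e)"
    using herm_index[OF herm' A'c, of 0 0] col0[of 0] by (simp add: complex_eq_iff)
  define A3 where "A3 = mat n n (\<lambda>(i,j). A' $$ (Suc i, Suc j))"
  have A3c: "A3 \<in> carrier_mat n n" by (simp add: A3_def)
  have herm3: "adj A3 = A3"
  proof (rule eq_matI)
    fix i j assume "i < dim_row A3" "j < dim_col A3"
    then have i: "i < n" and j: "j < n" by (auto simp: A3_def)
    show "adj A3 $$ (i,j) = A3 $$ (i,j)"
      using herm_index[OF herm' A'c, of "Suc j" "Suc i"] i j by (simp add: A3_def)
  qed (auto simp: A3_def)
  obtain U3 d3 where u3: "unitary n U3" and A3eq: "A3 = U3 * dmat n (\<lambda>i. complex_of_real (d3 i)) * adj U3"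
    using Suc.IH[OF A3c herm3] by blast
  note u3' = unitaryD[OF u3]
  define V where "V = mat (Suc n) (Suc n) (\<lambda>(i,j). if i = 0 then (if j = 0 then 1 else 0)
      else if j = 0 then 0 else U3 $$ (i - 1, j - 1))"
  have Vc: "V \<in> carrier_mat (Suc n) (Suc n)" by (simp add: V_def)
  have VV: "adj V * V = 1\<^sub>m (Suc n)"
  proof (rule eq_matI)
    fix i j assume "i < dim_row (1\<^sub>m (Suc n))" "j < dim_col (1\<^sub>m (Suc n))"
    then have i: "i < Suc n" and j: "j < Suc n" by auto
    have "(adj V * V) $$ (i,j) = (\<Sum>k<Suc n. cnj (V $$ (k,i)) * V $$ (k,j))"
      using i j Vc by (simp add: scalar_prod_def atLeast0LessThan)
    also have "\<dots> = cnj (V $$ (0,i)) * V $$ (0,j) + (\<Sum>k<n. cnj (V $$ (Suc k,i)) * V $$ (Suc k,j))"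
      by (rule sum.lessThan_Suc_shift)
    finally have e1: "(adj V * V) $$ (i,j) = cnj (V $$ (0,i)) * V $$ (0,j) + (\<Sum>k<n. cnj (V $$ (Suc k,i)) * V $$ (Suc k,j))" .
    show "(adj V * V) $$ (i,j) = 1\<^sub>m (Suc n) $$ (i,j)"
    proof (cases i)
      case 0
      then show ?thesis using e1 i j by (cases j) (auto simp: V_def)
    next
      case (Suc i')
      show ?thesis
      proof (cases j)
        case 0
        then show ?thesis using e1 i j Suc by (auto simp: V_def)
      next
        case (Suc j')
        have "(\<Sum>k<n. cnj (V $$ (Suc k,i)) * V $$ (Suc k,j)) = (adj U3 * U3) $$ (i',j')"
          using i j u3'(1) \<open>i = Suc i'\<close> Suc by (simp add: V_def scalar_prod_def atLeast0LessThan)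
        then show ?thesis using e1 i j u3' \<open>i = Suc i'\<close> Suc by (simp add: V_def)
      qed
    qed
  qed (use Vc in auto)
  have uV: "unitary (Suc n) V" using Vc VV by (simp add: unitary_def)
  define d where "d i = (if i = 0 then Re e else d3 (i - 1))" for i
  have A'V: "A' = V * dmat (Suc n) (\<lambda>i. complex_of_real (d i)) * adj V"
  proof (rule eq_matI)
    fix i j assume "i < dim_row (V * dmat (Suc n) (\<lambda>i. complex_of_real (d i)) * adj V)"
      "j < dim_col (V * dmat (Suc n) (\<lambda>i. complex_of_real (d i)) * adj V)"
    then have i: "i < Suc n" and j: "j < Suc n" using Vc by auto
    have "(V * dmat (Suc n) (\<lambda>i. complex_of_real (d i)) * adj V) $$ (i,j)
       = (\<Sum>l<Suc n. V $$ (i,l) * complex_of_real (d l) * cnj (V $$ (j,l)))"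
      by (rule conj_dmat_index[OF Vc i j])
    also have "\<dots> = V $$ (i,0) * complex_of_real (d 0) * cnj (V $$ (j,0))
       + (\<Sum>l<n. V $$ (i,Suc l) * complex_of_real (d (Suc l)) * cnj (V $$ (j,Suc l)))"
      by (rule sum.lessThan_Suc_shift)
    finally have e1: "(V * dmat (Suc n) (\<lambda>i. complex_of_real (d i)) * adj V) $$ (i,j)
       = V $$ (i,0) * complex_of_real (d 0) * cnj (V $$ (j,0))
       + (\<Sum>l<n. V $$ (i,Suc l) * complex_of_real (d (Suc l)) * cnj (V $$ (j,Suc l)))" .
    show "A' $$ (i,j) = (V * dmat (Suc n) (\<lambda>i. complex_of_real (d i)) * adj V) $$ (i,j)"
    proof (cases i)
      case 0
      then show ?thesis using e1 i j row0[OF j] ereal by (cases j) (auto simp: V_def d_def)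
    next
      case (Suc i')
      show ?thesis
      proof (cases j)
        case 0
        then show ?thesis using e1 i j col0[OF i] \<open>i = Suc i'\<close> by (auto simp: V_def d_def)
      next
        case (Suc j')
        have "(\<Sum>l<n. V $$ (i,Suc l) * complex_of_real (d (Suc l)) * cnj (V $$ (j,Suc l)))
            = (U3 * dmat n (\<lambda>i. complex_of_real (d3 i)) * adj U3) $$ (i',j')"
          using i j \<open>i = Suc i'\<close> Suc conj_dmat_index[OF u3'(1), of i' j' "\<lambda>i. complex_of_real (d3 i)"]
          by (simp add: V_def d_def del: index_mult_mat)
        also have "\<dots> = A' $$ (i,j)" using i j \<open>i = Suc i'\<close> Suc by (simp add: A3eq[symmetric] A3_def)
        finally show ?thesis using e1 i j \<open>i = Suc i'\<close> Suc by (simp add: V_def)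
      qed
    qed
  qed (use Vc A'c in auto)
  define D where "D = dmat (Suc n) (\<lambda>i. complex_of_real (d i))"
  have Dc: "D \<in> carrier_mat (Suc n) (Suc n)" by (simp add: D_def)
  have "A = W * A' * adj W"
  proof -
    have "W * A' = A * W" unfolding A'eq using unitary_cancel(2)[OF uW, of "A * W" "Suc n"] A w by simp
    then have "W * A' * adj W = A * (W * adj W)" using A w by (simp add: mult_assoc3)
    then show ?thesis using A w by simp
  qed
  also have "\<dots> = W * (V * D * adj V) * adj W" using A'V by (simp add: D_def)
  also have "\<dots> = (W * V) * D * adj (W * V)"
  proof -
    note vv = unitaryD[OF uV]
    have "adj (W * V) = adj V * adj W" by (rule adj_mult) (use w vv in auto)
    then show ?thesis using w vv Dc by (simp add: mult_assoc3)
  qed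
  finally show ?case using unitary_mult[OF uW uV] unfolding D_def by blast
qed




lemma assoc_dims: "dim_col A = dim_row B \<Longrightarrow> dim_col B = dim_row C \<Longrightarrow> A * B * C = A * (B * (C::'a::semiring_0 mat))"
  by (rule assoc_mult_mat[of A "dim_row A" "dim_col A" B "dim_col B" C "dim_col C"]) auto

lemma adj_conj: assumes u: "unitary n U"
  shows "adj (U * dmat n c * adj U) = U * dmat n (\<lambda>i. cnj (c i)) * adj U"
proof -
  note uu = unitaryD[OF u]
  have "adj (U * dmat n c * adj U) = adj (adj U) * adj (U * dmat n c)"
    by (rule adj_mult) (use uu in auto)
  also have "adj (U * dmat n c) = adj (dmat n c) * adj U" by (rule adj_mult) (use uu in auto)
  finally show ?thesis using uu by (simp add: adj_dmat mult_assoc3)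
qed

lemma conj_mult: assumes u: "unitary n U"
  shows "(U * dmat n a * adj U) * (U * dmat n b * adj U) = U * dmat n (\<lambda>i. a i * b i) * adj U"
proof -
  note uu = unitaryD[OF u]
  have e1: "U * dmat n b * adj U = U * (dmat n b * adj U)"
    by (rule assoc_mult_mat) (use uu in auto)
  have "(U * dmat n a * adj U) * (U * (dmat n b * adj U)) = (U * dmat n a) * (adj U * (U * (dmat n b * adj U)))"
    by (rule assoc_mult_mat) (use uu in auto)
  also have "\<dots> = (U * dmat n a) * (dmat n b * adj U)"
    using unitary_cancel(1)[OF u, of "dmat n b * adj U" n] uu by simp
  also have "\<dots> = (U * dmat n a) * dmat n b * adj U"
    by (rule assoc_mult_mat[symmetric]) (use uu in auto)
  also have "(U * dmat n a) * dmat n b = U * (dmat n a * dmat n b)"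
    by (rule assoc_mult_mat) (use uu in auto)
  finally show ?thesis unfolding e1 by (simp add: dmat_mult)
qed

lemma conj_diff: assumes U: "U \<in> carrier_mat n n"
  shows "U * dmat n a * adj U - U * dmat n b * adj U = U * dmat n (\<lambda>i. a i - b i) * adj U"
proof (rule eq_matI)
  fix i j assume "i < dim_row (U * dmat n (\<lambda>i. a i - b i) * adj U)" "j < dim_col (U * dmat n (\<lambda>i. a i - b i) * adj U)"
  then have i: "i < n" and j: "j < n" using U by auto
  show "(U * dmat n a * adj U - U * dmat n b * adj U) $$ (i, j) = (U * dmat n (\<lambda>i. a i - b i) * adj U) $$ (i, j)"
  proof -
    have "(U * dmat n a * adj U - U * dmat n b * adj U) $$ (i, j) = (U * dmat n a * adj U) $$ (i, j) - (U * dmat n b * adj U) $$ (i, j)"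
      by (rule index_minus_mat(1)) (use i j U in auto)
    then show ?thesis
      using conj_dmat_index[OF U i j, of a] conj_dmat_index[OF U i j, of b]
        conj_dmat_index[OF U i j, of "\<lambda>i. a i - b i"]
      by (simp del: index_mult_mat add: sum_subtractf[symmetric] algebra_simps)
  qed
qed (use U in auto)

lemma cnj_sq1: "cnj z * z = complex_of_real ((cmod z)\<^sup>2)"
  by (metis complex_norm_square mult.commute)

lemma cnj_sq2: "z * cnj z = complex_of_real ((cmod z)\<^sup>2)"
  by (metis complex_norm_square)

lemma cnj_sq3: "z * complex_of_real r * cnj z = complex_of_real (r * (cmod z)\<^sup>2)"
proof -
  have "z * complex_of_real r * cnj z = complex_of_real r * (z * cnj z)" by (simp add: algebra_simps)
  then show ?thesis by (simp only: cnj_sq2 of_real_mult)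
qed

lemma sum_list_upt_lessThan: "sum_list (map g [0..<n]) = (\<Sum>i<n. g i)"
  by (induction n) auto

lemma tn_diag: assumes u: "unitary n U"
  shows "trace_norm (U * dmat n c * adj U) = (\<Sum>i<n. cmod (c i))"
proof -
  have "adj (U * dmat n c * adj U) * (U * dmat n c * adj U) = U * dmat n (\<lambda>i. cnj (c i) * c i) * adj U"
    using adj_conj[OF u] conj_mult[OF u] by simp
  then have "eigvals (adj (U * dmat n c * adj U) * (U * dmat n c * adj U)) = mset (map (\<lambda>i. cnj (c i) * c i) [0..<n])"
    using eig_conj[OF u] by simp
  then have "trace_norm (U * dmat n c * adj U) = sum_mset (mset (map (\<lambda>a. sqrt (Re a)) (map (\<lambda>i. cnj (c i) * c i) [0..<n])))"
    unfolding trace_norm_def by (simp only: mset_map)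
  also have "\<dots> = (\<Sum>i<n. sqrt (Re (cnj (c i) * c i)))"
    by (simp only: sum_mset_sum_list map_map o_def sum_list_upt_lessThan)
  also have "\<dots> = (\<Sum>i<n. cmod (c i))"
  proof (rule sum.cong)
    fix i
    have "cnj (c i) * c i = complex_of_real ((cmod (c i))\<^sup>2)"
      by (rule cnj_sq1)
    then show "sqrt (Re (cnj (c i) * c i)) = cmod (c i)" by simp
  qed simp
  finally show ?thesis .
qed

lemma unit_colsum: assumes u: "unitary n G" "i < n"
  shows "(\<Sum>k<n. (cmod (G $$ (k,i)))\<^sup>2) = 1"
proof -
  note g = unitaryD[OF u(1)]
  have "(adj G * G) $$ (i,i) = (\<Sum>k<n. cnj (G $$ (k,i)) * G $$ (k,i))"
    using g(1) u(2) by (simp add: scalar_prod_def atLeast0LessThan)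
  also have "\<dots> = complex_of_real (\<Sum>k<n. (cmod (G $$ (k,i)))\<^sup>2)"
    by (simp only: cnj_sq1 of_real_sum)
  finally have h: "(adj G * G) $$ (i,i) = complex_of_real (\<Sum>k<n. (cmod (G $$ (k,i)))\<^sup>2)" .
  have one: "(adj G * G) $$ (i,i) = 1" using g u(2) by simp
  have "complex_of_real (\<Sum>k<n. (cmod (G $$ (k,i)))\<^sup>2) = 1" using h one by metis
  then show ?thesis by (simp only: of_real_eq_1_iff)
qed

lemma unit_rowsum: assumes u: "unitary n G" "k < n"
  shows "(\<Sum>i<n. (cmod (G $$ (k,i)))\<^sup>2) = 1"
proof -
  note g = unitaryD[OF u(1)]
  have "(G * adj G) $$ (k,k) = (\<Sum>i<n. G $$ (k,i) * cnj (G $$ (k,i)))"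
    using g(1) u(2) by (simp add: scalar_prod_def atLeast0LessThan)
  also have "\<dots> = complex_of_real (\<Sum>i<n. (cmod (G $$ (k,i)))\<^sup>2)"
    by (simp only: cnj_sq2 of_real_sum)
  finally have h: "(G * adj G) $$ (k,k) = complex_of_real (\<Sum>i<n. (cmod (G $$ (k,i)))\<^sup>2)" .
  have one: "(G * adj G) $$ (k,k) = 1" using g u(2) by simp
  have "complex_of_real (\<Sum>i<n. (cmod (G $$ (k,i)))\<^sup>2) = 1" using h one by metis
  then show ?thesis by (simp only: of_real_eq_1_iff)
qed

lemma conj_change: assumes u: "unitary n U" and e: "unitary n E"
  shows "adj E * (U * dmat n c * adj U) * E = (adj E * U) * dmat n c * adj (adj E * U)"
proof -
  note uu = unitaryD[OF u] and ee = unitaryD[OF e]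
  have "adj (adj E * U) = adj U * E" by (subst adj_mult) (use uu ee in auto)
  then show ?thesis using uu ee by (simp add: assoc_dims)
qed

lemma conj_diag_entry: assumes G: "G \<in> carrier_mat n n" "k < n"
  shows "(G * dmat n (\<lambda>i. complex_of_real (r i)) * adj G) $$ (k,k) = complex_of_real (\<Sum>i<n. r i * (cmod (G $$ (k,i)))\<^sup>2)"
proof -
  have "(G * dmat n (\<lambda>i. complex_of_real (r i)) * adj G) $$ (k,k) = (\<Sum>i<n. G $$ (k,i) * complex_of_real (r i) * cnj (G $$ (k,i)))"
    by (rule conj_dmat_index[OF G(1) G(2) G(2)])
  also have "\<dots> = complex_of_real (\<Sum>i<n. r i * (cmod (G $$ (k,i)))\<^sup>2)"
    by (simp only: cnj_sq3 of_real_sum)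
  finally show ?thesis .
qed

lemma pinch: assumes u: "unitary n U" and e: "unitary n E"
  shows "(\<Sum>k<n. cmod ((adj E * (U * dmat n (\<lambda>i. complex_of_real (r i)) * adj U) * E) $$ (k,k))) \<le> (\<Sum>i<n. \<bar>r i\<bar>)"
proof -
  define G where "G = adj E * U"
  have uG: "unitary n G" unfolding G_def using unitary_mult[OF unitary_adj[OF e] u] .
  note g = unitaryD[OF uG]
  have "(\<Sum>k<n. cmod ((adj E * (U * dmat n (\<lambda>i. complex_of_real (r i)) * adj U) * E) $$ (k,k)))
      = (\<Sum>k<n. \<bar>\<Sum>i<n. r i * (cmod (G $$ (k,i)))\<^sup>2\<bar>)"
    unfolding conj_change[OF u e, folded G_def]
  proof (rule sum.cong)
    fix k assume "k \<in> {..<n}"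
    then have k: "k < n" by simp
    show "cmod ((G * dmat n (\<lambda>i. complex_of_real (r i)) * adj G) $$ (k, k)) = \<bar>\<Sum>i<n. r i * (cmod (G $$ (k, i)))\<^sup>2\<bar>"
      by (simp only: conj_diag_entry[OF g(1) k] norm_of_real)
  qed simp
  also have "\<dots> \<le> (\<Sum>k<n. \<Sum>i<n. \<bar>r i\<bar> * (cmod (G $$ (k,i)))\<^sup>2)"
    by (rule sum_mono) (rule order_trans[OF sum_abs], simp add: abs_mult)
  also have "\<dots> = (\<Sum>i<n. \<bar>r i\<bar> * (\<Sum>k<n. (cmod (G $$ (k,i)))\<^sup>2))"
    by (subst sum.swap) (simp add: sum_distrib_left)
  also have "\<dots> = (\<Sum>i<n. \<bar>r i\<bar>)" using unit_colsum[OF uG] by simp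
  finally show ?thesis .
qed

lemma quad_entry: assumes A: "A \<in> carrier_mat n n" and B: "B \<in> carrier_mat n m" and k: "k < m"
  shows "(adj B * (A * B)) $$ (k,k) = (A *\<^sub>v col B k) \<bullet>c col B k"
  using A B k by (simp add: scalar_prod_def atLeast0LessThan mult.commute)

lemma trace_swap: fixes X Y :: "complex mat" assumes X: "X \<in> carrier_mat n m" and Y: "Y \<in> carrier_mat m n"
  shows "(\<Sum>a<n. (X * Y) $$ (a,a)) = (\<Sum>k<m. (Y * X) $$ (k,k))"
proof -
  have "(\<Sum>a<n. (X * Y) $$ (a,a)) = (\<Sum>a<n. \<Sum>k<m. X $$ (a,k) * Y $$ (k,a))"
    using X Y by (simp add: scalar_prod_def atLeast0LessThan)
  also have "\<dots> = (\<Sum>k<m. \<Sum>a<n. Y $$ (k,a) * X $$ (a,k))"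
    by (subst sum.swap) (simp add: mult.commute[of "X $$ _"])
  also have "\<dots> = (\<Sum>k<m. (Y * X) $$ (k,k))"
    using X Y by (simp add: scalar_prod_def atLeast0LessThan)
  finally show ?thesis .
qed

lemma psd_conj: assumes U: "U \<in> carrier_mat n n" and v: "v \<in> carrier_vec n"
  and r: "\<And>i. i < n \<Longrightarrow> r i \<ge> 0"
  shows "0 \<le> Re (((U * dmat n (\<lambda>i. complex_of_real (r i)) * adj U) *\<^sub>v v) \<bullet>c v)"
proof -
  define B where "B = mat n 1 (\<lambda>(a,_). v $ a)"
  have Bc: "B \<in> carrier_mat n 1" by (simp add: B_def)
  have colB: "col B 0 = v" using v by (auto simp: B_def)
  define A where "A = U * dmat n (\<lambda>i. complex_of_real (r i)) * adj U"
  have Ac: "A \<in> carrier_mat n n" using U by (simp add: A_def)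
  define G where "G = adj B * U"
  have Gc: "G \<in> carrier_mat 1 n" using U Bc unfolding G_def by (meson adj_carrier mult_carrier_mat)
  have adjG: "adj G = adj U * B" unfolding G_def by (subst adj_mult) (use U Bc in auto)
  have "adj B * (A * B) = G * dmat n (\<lambda>i. complex_of_real (r i)) * adj G"
    using adjG U Bc unfolding G_def A_def by (simp add: assoc_dims)
  then have "(A *\<^sub>v v) \<bullet>c v = (G * dmat n (\<lambda>i. complex_of_real (r i)) * adj G) $$ (0,0)"
    using quad_entry[OF Ac Bc, of 0] colB by simp
  also have "\<dots> = (\<Sum>l<n. G $$ (0,l) * complex_of_real (r l) * cnj (G $$ (0,l)))"
    by (rule conj_dmat_index[OF Gc]) simp_all
  also have "\<dots> = complex_of_real (\<Sum>l<n. r l * (cmod (G $$ (0,l)))\<^sup>2)"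
    by (simp only: cnj_sq3 of_real_sum)
  finally have "Re ((A *\<^sub>v v) \<bullet>c v) = (\<Sum>l<n. r l * (cmod (G $$ (0,l)))\<^sup>2)" by simp
  also have "\<dots> \<ge> 0" using r by (intro sum_nonneg) simp
  finally show ?thesis unfolding A_def .
qed




definition topk :: "real list \<Rightarrow> nat \<Rightarrow> real" where
  "topk ys k = sum_list (take k (sort_desc ys))"

lemma topk_mset: assumes "mset ys = mset ys'" shows "topk ys k = topk ys' k"
proof -
  have "sort ys = sort ys'" by (rule properties_for_sort) (use assms in simp_all)
  then show ?thesis by (simp add: topk_def sort_desc_def)
qed

lemma topk_attain: fixes g :: "nat \<Rightarrow> real" assumes k: "k \<le> N"
  shows "\<exists>S. S \<subseteq> {..<N} \<and> card S = k \<and> topk (map g [0..<N]) k = (\<Sum>a\<in>S. g a)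
     \<and> (\<forall>a\<in>S. \<forall>b\<in>{..<N}-S. g b \<le> g a)"
proof -
  define xs where "xs = sort_key (\<lambda>i. - g i) [0..<N]"
  have mx: "mset xs = mset [0..<N]" by (simp add: xs_def)
  have sx: "set xs = {..<N}" by (simp add: xs_def atLeast0LessThan)
  have dx: "distinct xs" by (simp add: xs_def)
  have lx: "length xs = N" by (simp add: xs_def)
  have so: "sorted (map (\<lambda>i. - g i) xs)" by (simp add: xs_def)
  then have sw: "sorted_wrt (\<lambda>a b. g b \<le> g a) xs" by (simp add: sorted_map)
  have "sort (map g [0..<N]) = rev (map g xs)"
  proof (rule properties_for_sort)
    show "mset (rev (map g xs)) = mset (map g [0..<N])" using mx by (simp del: mset_upt)
    show "sorted (rev (map g xs))" using sw by (simp add: sorted_wrt_rev sorted_wrt_map)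
  qed
  then have sd: "sort_desc (map g [0..<N]) = map g xs" by (simp add: sort_desc_def)
  define S where "S = set (take k xs)"
  have "topk (map g [0..<N]) k = sum_list (map g (take k xs))" by (simp add: topk_def sd take_map)
  also have "\<dots> = (\<Sum>a\<in>S. g a)" unfolding S_def
    by (rule sum_list_distinct_conv_sum_set) (simp add: dx)
  finally have t: "topk (map g [0..<N]) k = (\<Sum>a\<in>S. g a)" .
  have c: "card S = k" unfolding S_def using dx lx k by (simp add: distinct_card)
  have sub: "S \<subseteq> {..<N}" unfolding S_def using sx set_take_subset by metis
  have thr: "\<forall>a\<in>S. \<forall>b\<in>{..<N}-S. g b \<le> g a"
  proof (intro ballI)
    fix a b assume a: "a \<in> S" and b: "b \<in> {..<N}-S"
    have "set xs = set (take k xs) \<union> set (drop k xs)" by (metis append_take_drop_id set_append)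
    then have b': "b \<in> set (drop k xs)" using b sx unfolding S_def by auto
    have "sorted_wrt (\<lambda>a b. g b \<le> g a) (take k xs @ drop k xs)" using sw by simp
    then show "g b \<le> g a" using a b' unfolding S_def sorted_wrt_append by blast
  qed
  show ?thesis using t c sub thr by blast
qed

lemma threshold_bound: fixes g c :: "nat \<Rightarrow> real"
  assumes I: "finite I" and SI: "S \<subseteq> I" and thr: "\<forall>a\<in>S. \<forall>b\<in>I-S. g b \<le> g a"
    and c01: "\<forall>b\<in>I. 0 \<le> c b \<and> c b \<le> 1" and csum: "(\<Sum>b\<in>I. c b) = real (card S)"
  shows "(\<Sum>b\<in>I. c b * g b) \<le> (\<Sum>a\<in>S. g a)"
proof (cases "S = {}")
  case True
  then have "\<forall>b\<in>I. c b = 0" using csum c01 I by (simp add: sum_nonneg_eq_0_iff)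
  then show ?thesis using True by simp
next
  case False
  have fS: "finite S" using I SI finite_subset by blast
  define t where "t = Min (g ` S)"
  have tS: "\<forall>a\<in>S. t \<le> g a" using fS by (simp add: t_def)
  have "t \<in> g ` S" unfolding t_def using fS False by (intro Min_in) auto
  then obtain a0 where a0: "a0 \<in> S" "t = g a0" by auto
  have tI: "\<forall>b\<in>I-S. g b \<le> t" using thr a0 by auto
  have split: "(\<Sum>b\<in>I. c b * g b) = (\<Sum>b\<in>I-S. c b * g b) + (\<Sum>b\<in>S. c b * g b)"
    using sum.subset_diff[OF SI I] by simp
  have split2: "(\<Sum>b\<in>I. c b) = (\<Sum>b\<in>I-S. c b) + (\<Sum>b\<in>S. c b)"
    using sum.subset_diff[OF SI I] by simp
  have 1: "(\<Sum>b\<in>I-S. c b * g b) \<le> (\<Sum>b\<in>I-S. c b * t)"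
  proof (rule sum_mono)
    fix b assume b: "b \<in> I - S"
    then have "0 \<le> c b" using c01 by auto
    then show "c b * g b \<le> c b * t" using tI b by (intro mult_left_mono) auto
  qed
  have 2: "(\<Sum>b\<in>S. (1 - c b) * t) \<le> (\<Sum>b\<in>S. (1 - c b) * g b)"
  proof (rule sum_mono)
    fix b assume b: "b \<in> S"
    then have "b \<in> I" using SI by auto
    then have "0 \<le> 1 - c b" using c01 by auto
    then show "(1 - c b) * t \<le> (1 - c b) * g b" using tS b by (intro mult_left_mono) auto
  qed
  have e1: "(\<Sum>b\<in>S. (1 - c b) * g b) = (\<Sum>b\<in>S. g b) - (\<Sum>b\<in>S. c b * g b)"
    by (simp add: algebra_simps sum_subtractf)
  have e2: "(\<Sum>b\<in>S. (1 - c b) * t) = real (card S) * t - (\<Sum>b\<in>S. c b) * t"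
    by (simp add: algebra_simps sum_subtractf sum_distrib_right sum_distrib_left)
  have e3: "(\<Sum>b\<in>I-S. c b * t) = (\<Sum>b\<in>I-S. c b) * t"
    by (simp add: sum_distrib_right)
  have e4: "real (card S) * t = (\<Sum>b\<in>I-S. c b) * t + (\<Sum>b\<in>S. c b) * t"
    using split2 csum by (simp add: algebra_simps)
  show ?thesis using split 1 2 e1 e2 e3 e4 by linarith
qed

lemma ds_maj: fixes g1 g2 :: "nat \<Rightarrow> real" and T :: "nat \<Rightarrow> nat \<Rightarrow> real"
  assumes Tnn: "\<forall>a<N. \<forall>b<N. 0 \<le> T a b"
   and rows: "\<forall>a<N. (\<Sum>b<N. T a b) = 1" and cols: "\<forall>b<N. (\<Sum>a<N. T a b) = 1"
   and g2: "\<forall>a<N. g2 a = (\<Sum>b<N. T a b * g1 b)" and k: "k \<le> N"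
  shows "topk (map g2 [0..<N]) k \<le> topk (map g1 [0..<N]) k"
proof -
  obtain S2 where S2: "S2 \<subseteq> {..<N}" "card S2 = k" "topk (map g2 [0..<N]) k = (\<Sum>a\<in>S2. g2 a)"
    using topk_attain[OF k] by blast
  obtain S1 where S1: "S1 \<subseteq> {..<N}" "card S1 = k" "topk (map g1 [0..<N]) k = (\<Sum>a\<in>S1. g1 a)"
    "\<forall>a\<in>S1. \<forall>b\<in>{..<N}-S1. g1 b \<le> g1 a"
    using topk_attain[OF k] by blast
  have fS2: "finite S2" using S2(1) finite_subset by blast
  define c where "c b = (\<Sum>a\<in>S2. T a b)" for b
  have "(\<Sum>a\<in>S2. g2 a) = (\<Sum>a\<in>S2. \<Sum>b<N. T a b * g1 b)" using S2(1) g2 by (intro sum.cong) auto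
  also have "\<dots> = (\<Sum>b<N. c b * g1 b)" unfolding c_def by (subst sum.swap) (simp add: sum_distrib_right)
  also have "\<dots> \<le> (\<Sum>a\<in>S1. g1 a)"
  proof (rule threshold_bound)
    show "finite {..<N}" by simp
    show "S1 \<subseteq> {..<N}" by (rule S1(1))
    show "\<forall>a\<in>S1. \<forall>b\<in>{..<N}-S1. g1 b \<le> g1 a" by (rule S1(4))
    show "\<forall>b\<in>{..<N}. 0 \<le> c b \<and> c b \<le> 1"
    proof
      fix b assume b: "b \<in> {..<N}"
      have "0 \<le> c b" unfolding c_def using S2(1) Tnn b by (intro sum_nonneg) auto
      moreover have "c b \<le> (\<Sum>a<N. T a b)" unfolding c_def
        by (rule sum_mono2) (use S2(1) Tnn b in auto)
      ultimately show "0 \<le> c b \<and> c b \<le> 1" using cols b by auto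
    qed
    have "(\<Sum>b<N. c b) = (\<Sum>a\<in>S2. \<Sum>b<N. T a b)" unfolding c_def by (rule sum.swap)
    also have "\<dots> = (\<Sum>a\<in>S2. 1)" using S2(1) rows by (intro sum.cong) auto
    finally show "(\<Sum>b<N. c b) = real (card S1)" using S1(2) S2(2) by simp
  qed
  finally show ?thesis using S1(3) S2(3) by simp
qed

lemma maj_trans: assumes m: "majorizes xs ys1" and l: "length xs = N" "length ys1 = N" "length ys2 = N"
  and t: "\<forall>k\<le>N. topk ys2 k \<le> topk ys1 k"
  shows "majorizes xs ys2"
  using m l unfolding majorizes_def Let_def
proof (simp, intro allI impI)
  fix k assume a: "\<forall>k\<le>N. sum_list (take k (sort_desc ys1)) \<le> sum_list (take k (sort_desc xs))" and k: "k \<le> N"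
  show "sum_list (take k (sort_desc ys2)) \<le> sum_list (take k (sort_desc xs))"
    using a[rule_format, OF k] t[rule_format, OF k] unfolding topk_def by linarith
qed

lemma sum_split_dm: fixes m :: nat shows "(\<Sum>b<n*m. f (b div m) (b mod m)) = (\<Sum>i<n. \<Sum>j<m. f i j)"
  unfolding sum_split_mult by (intro sum.cong refl) (simp add: divmod_pair)




definition bmat :: "nat \<Rightarrow> (nat \<Rightarrow> complex vec) \<Rightarrow> complex mat" where
  "bmat n e = mat n n (\<lambda>(i,k). e k $ i)"

lemma bmat_carrier[simp]: "bmat n e \<in> carrier_mat n n"
  by (simp add: bmat_def)

lemma bmat_unitary: assumes "orthonormal_basis n e" shows "unitary n (bmat n e)"
proof -
  have ec: "\<And>i. i < n \<Longrightarrow> e i \<in> carrier_vec n"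
    and eo: "\<And>i j. i < n \<Longrightarrow> j < n \<Longrightarrow> e i \<bullet>c e j = (if i = j then 1 else 0)"
    using assms by (auto simp: orthonormal_basis_def)
  have "adj (bmat n e) * bmat n e = 1\<^sub>m n"
  proof (rule eq_matI)
    fix i j assume "i < dim_row (1\<^sub>m n)" "j < dim_col (1\<^sub>m n)"
    then have i: "i < n" and j: "j < n" by auto
    have "(adj (bmat n e) * bmat n e) $$ (i,j) = e j \<bullet>c e i"
      using i j ec[OF i] ec[OF j] by (simp add: bmat_def scalar_prod_def atLeast0LessThan mult.commute)
    then show "(adj (bmat n e) * bmat n e) $$ (i,j) = 1\<^sub>m n $$ (i,j)" using eo[OF j i] i j by auto
  qed (auto simp: bmat_def)
  then show ?thesis by (simp add: unitary_def)
qed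

lemma bmat_diag: "diag_in n e w = bmat n e * dmat n (\<lambda>k. complex_of_real (w k)) * adj (bmat n e)"
proof (rule eq_matI)
  fix i j assume "i < dim_row (bmat n e * dmat n (\<lambda>k. complex_of_real (w k)) * adj (bmat n e))"
    "j < dim_col (bmat n e * dmat n (\<lambda>k. complex_of_real (w k)) * adj (bmat n e))"
  then have i: "i < n" and j: "j < n" by (auto simp: bmat_def)
  show "diag_in n e w $$ (i,j) = (bmat n e * dmat n (\<lambda>k. complex_of_real (w k)) * adj (bmat n e)) $$ (i,j)"
    apply (subst conj_dmat_index[OF bmat_carrier i j])
    using i j by (simp add: diag_in_def bmat_def algebra_simps)
qed (auto simp: diag_in_def bmat_def)

lemma adj_one[simp]: "adj (1\<^sub>m n) = 1\<^sub>m n"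
  by (rule eq_matI) auto

lemma diag_entry_self: assumes u: "unitary n E" "k < n"
  shows "(adj E * (E * dmat n (\<lambda>i. complex_of_real (r i)) * adj E) * E) $$ (k,k) = complex_of_real (r k)"
proof -
  note ee = unitaryD[OF u(1)]
  have "(adj E * (E * dmat n (\<lambda>i. complex_of_real (r i)) * adj E) * E) = (adj E * E) * dmat n (\<lambda>i. complex_of_real (r i)) * adj (adj E * E)"
    by (rule conj_change[OF u(1) u(1)])
  also have "\<dots> = dmat n (\<lambda>i. complex_of_real (r i))" using ee by simp
  finally show ?thesis using u(2) by simp
qed

lemma if_mult_zero: "(if P then a else 0) * b = (if P then a * b else (0::real))"
  by simp

lemma re_ofreal_mult: "Re (complex_of_real r * z) = r * Re z"
  by simp

lemma kron_eig_list: assumes M: "M \<in> carrier_mat m m" and u: "unitary n U"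
  and ev: "\<forall>n U d. unitary n U \<longrightarrow> eigvals (kron (U * dmat n d * adj U) M) = mset (map (\<lambda>a. d (a div m) * \<mu> (a mod m)) [0..<n*m])"
  shows "mset (eig_list (kron (U * dmat n (\<lambda>k. complex_of_real (r k)) * adj U) M)) = mset (map (\<lambda>a. r (a div m) * Re (\<mu> (a mod m))) [0..<n*m])"
    and "length (eig_list (kron (U * dmat n (\<lambda>k. complex_of_real (r k)) * adj U) M)) = n * m"
proof -
  have "mset (eig_list (kron (U * dmat n (\<lambda>k. complex_of_real (r k)) * adj U) M)) = image_mset Re (mset (map (\<lambda>a. complex_of_real (r (a div m)) * \<mu> (a mod m)) [0..<n*m]))"
    unfolding eig_list_def using ev u by simp
  also have "\<dots> = mset (map (\<lambda>a. r (a div m) * Re (\<mu> (a mod m))) [0..<n*m])"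
    by (simp only: mset_map[symmetric] map_map o_def Re_complex_of_real re_ofreal_mult)
  finally show 1: "mset (eig_list (kron (U * dmat n (\<lambda>k. complex_of_real (r k)) * adj U) M)) = mset (map (\<lambda>a. r (a div m) * Re (\<mu> (a mod m))) [0..<n*m])" .
  show "length (eig_list (kron (U * dmat n (\<lambda>k. complex_of_real (r k)) * adj U) M)) = n * m"
    using arg_cong[OF 1, of size] by simp
qed


theorem mainTheorem2:
  fixes n m :: nat and e f :: "nat \<Rightarrow> complex vec" and w w' :: "nat \<Rightarrow> real"
    and W W' :: "complex mat" and z :: "complex vec"
  assumes "m \<ge> 2"
    and "z \<in> carrier_vec m" and "z \<bullet>c z = 1"
    and "orthonormal_basis n e" and "orthonormal_basis n f"
    and "density_mat n W" and "density_mat n W'"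
    and "W = diag_in n e w" and "W' = diag_in n f w'"
    and "mat_succ (kron W ((1 / of_nat m) \<cdot>\<^sub>m 1\<^sub>m m)) (kron W' (ket_bra z z))"
  shows "\<exists>wt :: nat \<Rightarrow> real.
           density_mat n (diag_in n e wt) \<and>
           trace_dist W W' \<ge> trace_dist W (diag_in n e wt) \<and>
           mat_succ (kron W ((1 / of_nat m) \<cdot>\<^sub>m 1\<^sub>m m)) (kron (diag_in n e wt) (ket_bra z z))"
proof -
  have m0: "0 < m" using assms(1) by simp
  define E where "E = bmat n e"
  define F where "F = bmat n f"
  have uE: "unitary n E" unfolding E_def by (rule bmat_unitary[OF assms(4)])
  have uF: "unitary n F" unfolding F_def by (rule bmat_unitary[OF assms(5)])
  note ee = unitaryD[OF uE] and ff = unitaryD[OF uF]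
  have Weq: "W = E * dmat n (\<lambda>k. complex_of_real (w k)) * adj E" unfolding E_def using assms(8) bmat_diag by simp
  have W'eq: "W' = F * dmat n (\<lambda>k. complex_of_real (w' k)) * adj F" unfolding F_def using assms(9) bmat_diag by simp
  have Wc: "W \<in> carrier_mat n n" and W'c: "W' \<in> carrier_mat n n" using assms(6,7) by (auto simp: density_mat_def)
  have hW: "adj W = W" and hW': "adj W' = W'" using assms(6,7)
    by (auto simp: density_mat_def psd_mat_def hermitian_mat_def)
  define G where "G = adj E * F"
  have uG: "unitary n G" unfolding G_def by (rule unitary_mult[OF unitary_adj[OF uE] uF])
  note gg = unitaryD[OF uG]
  have W'E: "adj E * W' * E = G * dmat n (\<lambda>k. complex_of_real (w' k)) * adj G"
    unfolding W'eq G_def by (rule conj_change[OF uF uE])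
  define Sm where "Sm k i = (cmod (G $$ (k,i)))\<^sup>2" for k i
  define wt where "wt k = (\<Sum>i<n. w' i * Sm k i)" for k
  have wt_entry: "(adj E * W' * E) $$ (k,k) = complex_of_real (wt k)" if k: "k < n" for k
    unfolding W'E wt_def Sm_def by (rule conj_diag_entry[OF gg(1) k])
  have assocW': "adj E * W' * E = adj E * (W' * E)" by (rule assoc_mult_mat) (use W'c ee in auto)
  have wt_nn: "0 \<le> wt k" if k: "k < n" for k
  proof -
    have "(adj E * W' * E) $$ (k,k) = (W' *\<^sub>v col E k) \<bullet>c col E k"
      unfolding assocW' by (rule quad_entry[OF W'c ee(1) k])
    then have "wt k = Re ((W' *\<^sub>v col E k) \<bullet>c col E k)" using wt_entry[OF k] by (metis Re_complex_of_real)
    moreover have cv: "col E k \<in> carrier_vec n" using ee(1) by (metis carrier_matD(1) col_dim)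
    moreover have "psd_mat W'" using assms(7) by (simp add: density_mat_def)
    ultimately show ?thesis using W'c unfolding psd_mat_def by auto
  qed
  define D where "D = diag_in n e wt"
  have Deq: "D = E * dmat n (\<lambda>k. complex_of_real (wt k)) * adj E" unfolding D_def E_def by (rule bmat_diag)
  have Dc: "D \<in> carrier_mat n n" using ee unfolding Deq by simp
  have hD: "adj D = D" unfolding Deq by (simp add: adj_conj[OF uE])
  have psdD: "psd_mat D" unfolding psd_mat_def hermitian_mat_def
  proof (intro conjI ballI)
    show "square_mat D" using Dc by simp
    show "adj D = D" by (rule hD)
    fix v :: "complex vec" assume "v \<in> carrier_vec (dim_row D)"
    then have v: "v \<in> carrier_vec n" using Dc by simp
    show "0 \<le> Re ((D *\<^sub>v v) \<bullet>c v)" unfolding Deq by (rule psd_conj[OF ee(1) v wt_nn])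
  qed
  have sum_wt: "(\<Sum>k<n. complex_of_real (wt k)) = 1"
  proof -
    have "(\<Sum>k<n. complex_of_real (wt k)) = (\<Sum>k<n. (adj E * (W' * E)) $$ (k,k))"
      using wt_entry unfolding assocW' by simp
    also have "\<dots> = (\<Sum>a<n. ((W' * E) * adj E) $$ (a,a))"
      by (rule trace_swap[symmetric]) (use W'c ee in auto)
    also have "(W' * E) * adj E = W' * (E * adj E)" by (rule assoc_mult_mat) (use W'c ee in auto)
    also have "W' * (E * adj E) = W'" using W'c ee by simp
    also have "(\<Sum>a<n. W' $$ (a,a)) = mtrace W'" using W'c by (simp add: mtrace_def)
    also have "\<dots> = 1" using assms(7) by (simp add: density_mat_def)
    finally show ?thesis .
  qed
  have trD: "mtrace D = 1"
  proof -
    have "mtrace D = (\<Sum>a<n. ((E * dmat n (\<lambda>k. complex_of_real (wt k))) * adj E) $$ (a,a))"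
      unfolding mtrace_def Deq by (simp only: index_mult_mat(2) carrier_matD(1)[OF ee(1)])
    also have "\<dots> = (\<Sum>k<n. (adj E * (E * dmat n (\<lambda>k. complex_of_real (wt k)))) $$ (k,k))"
      by (rule trace_swap) (use ee in auto)
    also have "adj E * (E * dmat n (\<lambda>k. complex_of_real (wt k))) = dmat n (\<lambda>k. complex_of_real (wt k))"
      by (rule unitary_cancel(1)[OF uE dmat_carrier])
    also have "(\<Sum>k<n. dmat n (\<lambda>k. complex_of_real (wt k)) $$ (k,k)) = (\<Sum>k<n. complex_of_real (wt k))" by simp
    finally show ?thesis using sum_wt by simp
  qed
  have densD: "density_mat n (diag_in n e wt)" using Dc psdD trD unfolding D_def density_mat_def by simp
  define X where "X = W - W'"
  have Xc: "X \<in> carrier_mat n n" unfolding X_def by (rule minus_carrier_mat[OF W'c])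
  have hX: "adj X = X"
  proof (rule eq_matI)
    fix i j assume "i < dim_row X" "j < dim_col X"
    then have i: "i < n" and j: "j < n" using Xc by auto
    show "adj X $$ (i,j) = X $$ (i,j)"
      using i j Wc W'c herm_index[OF hW Wc i j] herm_index[OF hW' W'c i j] by (simp add: X_def)
  qed (use Xc in auto)
  obtain U r where uU: "unitary n U" and Xeq: "X = U * dmat n (\<lambda>i. complex_of_real (r i)) * adj U"
    using spectral[OF Xc hX] by blast
  have tnX: "trace_norm X = (\<Sum>i<n. \<bar>r i\<bar>)" by (simp only: Xeq tn_diag[OF uU] norm_of_real)
  have WD: "W - D = E * dmat n (\<lambda>k. complex_of_real (w k - wt k)) * adj E"
    unfolding Weq Deq using conj_diff[OF ee(1)] by simp
  have tnWD: "trace_norm (W - D) = (\<Sum>k<n. \<bar>w k - wt k\<bar>)" by (simp only: WD tn_diag[OF uE] norm_of_real)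
  have a1: "adj E * (W - W') = adj E * W - adj E * W'"
    by (rule mult_minus_distrib_mat[where nr=n and n=n and nc=n]) (use Wc W'c ee in auto)
  have a2: "(adj E * W - adj E * W') * E = adj E * W * E - adj E * W' * E"
    by (rule minus_mult_distrib_mat[where nr=n and n=n and nc=n]) (use Wc W'c ee in auto)
  have entry: "w k - wt k = Re ((adj E * X * E) $$ (k,k))" if k: "k < n" for k
  proof -
    have "(adj E * X * E) $$ (k,k) = (adj E * W * E) $$ (k,k) - (adj E * W' * E) $$ (k,k)"
      unfolding X_def a1 a2 by (rule index_minus_mat(1)) (use Wc W'c ee k in auto)
    also have "(adj E * W * E) $$ (k,k) = complex_of_real (w k)"
      unfolding Weq by (rule diag_entry_self[OF uE k])
    finally show ?thesis using wt_entry[OF k] by simp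
  qed
  have le1: "(\<Sum>k<n. \<bar>w k - wt k\<bar>) \<le> (\<Sum>k<n. cmod ((adj E * X * E) $$ (k,k)))"
    by (rule sum_mono) (simp add: entry abs_Re_le_cmod)
  have le2: "(\<Sum>k<n. cmod ((adj E * X * E) $$ (k,k))) \<le> (\<Sum>i<n. \<bar>r i\<bar>)"
    unfolding Xeq by (rule pinch[OF uU uE])
  have tdist: "trace_dist W W' \<ge> trace_dist W (diag_in n e wt)"
    unfolding trace_dist_def using tnX tnWD le1 le2 unfolding D_def X_def by simp
  define M where "M = ket_bra z z"
  have Mc: "M \<in> carrier_mat m m" using assms(2) by (simp add: M_def ket_bra_def)
  define L :: "complex mat" where "L = (1 / of_nat m) \<cdot>\<^sub>m 1\<^sub>m m"
  have Lc: "L \<in> carrier_mat m m" by (simp add: L_def)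
  obtain \<mu> where mu: "\<forall>n U d. unitary n U \<longrightarrow> eigvals (kron (U * dmat n d * adj U) M) = mset (map (\<lambda>a. d (a div m) * \<mu> (a mod m)) [0..<n*m])"
    using kron_eig[OF Mc] by blast
  obtain \<mu>L where muL: "\<forall>n U d. unitary n U \<longrightarrow> eigvals (kron (U * dmat n d * adj U) L) = mset (map (\<lambda>a. d (a div m) * \<mu>L (a mod m)) [0..<n*m])"
    using kron_eig[OF Lc] by blast
  define N where "N = n * m"
  define \<nu> where "\<nu> j = Re (\<mu> j)" for j
  have l0: "length (eig_list (kron W L)) = N" unfolding Weq N_def by (rule kron_eig_list(2)[OF Lc uE muL])
  have l1: "length (eig_list (kron W' M)) = N" unfolding W'eq N_def by (rule kron_eig_list(2)[OF Mc uF mu])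
  have l2: "length (eig_list (kron D M)) = N" unfolding Deq N_def by (rule kron_eig_list(2)[OF Mc uE mu])
  have ms1: "mset (eig_list (kron W' M)) = mset (map (\<lambda>a. w' (a div m) * \<nu> (a mod m)) [0..<N])"
    unfolding W'eq N_def \<nu>_def by (rule kron_eig_list(1)[OF Mc uF mu])
  have ms2: "mset (eig_list (kron D M)) = mset (map (\<lambda>a. wt (a div m) * \<nu> (a mod m)) [0..<N])"
    unfolding Deq N_def \<nu>_def by (rule kron_eig_list(1)[OF Mc uE mu])
  define T where "T a b = (if a mod m = b mod m then Sm (a div m) (b div m) else 0)" for a b
  have key: "\<forall>k\<le>N. topk (eig_list (kron D M)) k \<le> topk (eig_list (kron W' M)) k"
  proof (intro allI impI)
    fix k assume k: "k \<le> N"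
    have "topk (eig_list (kron D M)) k = topk (map (\<lambda>a. wt (a div m) * \<nu> (a mod m)) [0..<N]) k"
      by (rule topk_mset[OF ms2])
    also have "\<dots> \<le> topk (map (\<lambda>a. w' (a div m) * \<nu> (a mod m)) [0..<N]) k"
    proof (rule ds_maj[where T = T])
      show "\<forall>a<N. \<forall>b<N. 0 \<le> T a b" by (simp add: T_def Sm_def)
      show "\<forall>a<N. (\<Sum>b<N. T a b) = 1"
      proof (intro allI impI)
        fix a assume a: "a < N"
        have am: "a div m < n" "a mod m < m" using div_mod_bounds[of a n m] a unfolding N_def by auto
        have "(\<Sum>b<N. T a b) = (\<Sum>i<n. Sm (a div m) i)"
          using sum_split_dm[where f="\<lambda>i j. if a mod m = j then Sm (a div m) i else 0" and n=n and m=m] am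
          by (simp add: T_def N_def sum.delta sum.delta')
        also have "\<dots> = 1" unfolding Sm_def by (rule unit_rowsum[OF uG am(1)])
        finally show "(\<Sum>b<N. T a b) = 1" .
      qed
      show "\<forall>b<N. (\<Sum>a<N. T a b) = 1"
      proof (intro allI impI)
        fix b assume b: "b < N"
        have bm: "b div m < n" "b mod m < m" using div_mod_bounds[of b n m] b unfolding N_def by auto
        have "(\<Sum>a<N. T a b) = (\<Sum>i<n. Sm i (b div m))"
          using sum_split_dm[where f="\<lambda>i j. if j = b mod m then Sm i (b div m) else 0" and n=n and m=m] bm
          by (simp add: T_def N_def sum.delta sum.delta')
        also have "\<dots> = 1" unfolding Sm_def by (rule unit_colsum[OF uG bm(1)])
        finally show "(\<Sum>a<N. T a b) = 1" .
      qed
      show "\<forall>a<N. wt (a div m) * \<nu> (a mod m) = (\<Sum>b<N. T a b * (w' (b div m) * \<nu> (b mod m)))"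
      proof (intro allI impI)
        fix a assume a: "a < N"
        have am: "a div m < n" "a mod m < m" using div_mod_bounds[of a n m] a unfolding N_def by auto
        have "(\<Sum>b<N. T a b * (w' (b div m) * \<nu> (b mod m)))
            = (\<Sum>i<n. \<Sum>j<m. if a mod m = j then Sm (a div m) i * (w' i * \<nu> j) else 0)"
          using sum_split_dm[where f="\<lambda>i j. if a mod m = j then Sm (a div m) i * (w' i * \<nu> j) else 0" and n=n and m=m]
          by (simp add: T_def N_def if_mult_zero)
        also have "\<dots> = (\<Sum>i<n. Sm (a div m) i * (w' i * \<nu> (a mod m)))"
          using am by (simp add: sum.delta sum.delta')
        also have "\<dots> = wt (a div m) * \<nu> (a mod m)"
          by (simp add: wt_def sum_distrib_right sum_distrib_left algebra_simps)
        finally show "wt (a div m) * \<nu> (a mod m) = (\<Sum>b<N. T a b * (w' (b div m) * \<nu> (b mod m)))" by simp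
      qed
    qed (use k in simp)
    also have "\<dots> = topk (eig_list (kron W' M)) k" by (rule topk_mset[OF ms1, symmetric])
    finally show "topk (eig_list (kron D M)) k \<le> topk (eig_list (kron W' M)) k" .
  qed
  have maj0: "majorizes (eig_list (kron W L)) (eig_list (kron W' M))"
    using assms(10) unfolding mat_succ_def M_def L_def .
  have maj: "mat_succ (kron W L) (kron D M)"
    unfolding mat_succ_def by (rule maj_trans[OF maj0 l0 l1 l2 key])
  show ?thesis
    using densD tdist maj unfolding D_def M_def L_def by blast
qed


end
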